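(* For each $n\ge 2$ let $p=p_n\in(0,1)$ and let $X\sim\mathrm{Binomial}(n,p)$, $\hat p=X/n$, $\hat q=1-\hat p$. Fix $\alpha\in(0,1)$, let $\kappa_\alpha=z_{1-\alpha/2}^2$, and let $$CI_{new}=\left[\frac{(n-1)\hat p+(\kappa_\alpha-1)/2\mp\sqrt{n\kappa_\alpha\hat p\hat q+(\kappa_\alpha-1)^2/4-\hat p\hat q}}{n+\kappa_\alpha-2}\right]$$ (the lower endpoint with $-$, the upper with $+$). If $np\to\infty$ and $n(1-p)\to\infty$ as $n\to\infty$, then $\lim_{n\to\infty}\mathbb P(p\in CI_{new})=1-\alpha$.
   Context: $z_{1-\alpha/2}$ is the $(1-\alpha/2)$-quantile of the standard normal distribution. The success probability $p=p_n$ may depend on $n$. *)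

theory Defs
  imports "HOL-Probability.Probability"
begin

definition Phi :: "real \<Rightarrow> real" where
  "Phi x = measure std_normal_distribution {..x}"

definition normal_quantile :: "real \<Rightarrow> real" where
  "normal_quantile q = (THE z. Phi z = q)"

definition kappa :: "real \<Rightarrow> real" where
  "kappa \<alpha> = (normal_quantile (1 - \<alpha> / 2))\<^sup>2"

definition ci_lower :: "real \<Rightarrow> nat \<Rightarrow> nat \<Rightarrow> real" where
  "ci_lower \<alpha> n k =
     (let ph = real k / real n; qh = 1 - ph; \<kappa> = kappa \<alpha> in
      ((real n - 1) * ph + (\<kappa> - 1) / 2
        - sqrt (real n * \<kappa> * ph * qh + (\<kappa> - 1)\<^sup>2 / 4 - ph * qh)) / (real n + \<kappa> - 2))"

definition ci_upper :: "real \<Rightarrow> nat \<Rightarrow> nat \<Rightarrow> real" where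
  "ci_upper \<alpha> n k =
     (let ph = real k / real n; qh = 1 - ph; \<kappa> = kappa \<alpha> in
      ((real n - 1) * ph + (\<kappa> - 1) / 2
        + sqrt (real n * \<kappa> * ph * qh + (\<kappa> - 1)\<^sup>2 / 4 - ph * qh)) / (real n + \<kappa> - 2))"

end

theory Submission
  imports Defs
begin


lemma alg_id:
  fixes n K h x :: real
  shows "((n+K-2)*x - ((n-1)*h+(K-1)/2))^2 - (n*K*h*(1-h)+(K-1)^2/4-h*(1-h))
     = (n+K-2)*(n*(h-x)^2-(1-2*x)*(h-x)-K*x*(1-x))"
  by (simp add: algebra_simps power2_eq_square)

lemma ci_iff:
  assumes n: "n \<ge> 2" and K: "kappa \<alpha> > 0"
  shows "(ci_lower \<alpha> n k \<le> x \<and> x \<le> ci_upper \<alpha> n k) \<longleftrightarrow>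
    real n * (real k / real n - x)^2 - (1-2*x)*(real k / real n - x) \<le> kappa \<alpha> * x * (1-x)"
proof -
  define K where "K = kappa \<alpha>"
  define h where "h = real k / real n"
  define m where "m = real n + K - 2"
  define b where "b = (real n - 1) * h + (K - 1)/2"
  define D where "D = real n * K * h * (1-h) + (K-1)^2/4 - h*(1-h)"
  have m: "m > 0" using n K unfolding m_def K_def by simp
  have lo: "ci_lower \<alpha> n k = (b - sqrt D)/m" unfolding ci_lower_def Let_def b_def D_def m_def K_def h_def by simp
  have up: "ci_upper \<alpha> n k = (b + sqrt D)/m" unfolding ci_upper_def Let_def b_def D_def m_def K_def h_def by simp
  have "(ci_lower \<alpha> n k \<le> x \<and> x \<le> ci_upper \<alpha> n k) \<longleftrightarrow> \<bar>m*x - b\<bar> \<le> sqrt D"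
    unfolding lo up using m by (auto simp: divide_le_eq le_divide_eq abs_le_iff algebra_simps)
  also have "\<dots> \<longleftrightarrow> (m*x-b)^2 \<le> D"
  proof (cases "D \<ge> 0")
    case True then show ?thesis
      by (metis abs_ge_zero real_sqrt_abs real_sqrt_le_iff real_sqrt_ge_zero abs_of_nonneg real_sqrt_le_mono sqrt_le_D)
  next
    case False
    then have "sqrt D < 0" by simp
    then show ?thesis using False by (smt (verit) zero_le_power2 abs_ge_zero)
  qed
  also have "\<dots> \<longleftrightarrow> m*(real n*(h-x)^2-(1-2*x)*(h-x)-K*x*(1-x)) \<le> 0"
    using alg_id[where n="real n" and K=K and h=h and x=x] unfolding m_def b_def D_def by linarith
  also have "\<dots> \<longleftrightarrow> real n*(h-x)^2-(1-2*x)*(h-x) \<le> K*x*(1-x)"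
    using m by (simp add: mult_le_0_iff)
  finally show ?thesis unfolding h_def K_def by (simp add: mult.assoc)
qed


abbreviation "N \<equiv> std_normal_distribution"

lemma Phi_cdf: "Phi = cdf N"
  by (simp add: fun_eq_iff Phi_def cdf_def)

lemma N_single: "measure N {x} = 0"
proof -
  have "emeasure N {x} = (\<integral>\<^sup>+ y. ennreal (std_normal_density y) * indicator {x} y \<partial>lborel)"
    by (rule emeasure_density) auto
  also have "\<dots> = (\<integral>\<^sup>+ y. ennreal (std_normal_density x) * indicator {x} y \<partial>lborel)"
    by (intro nn_integral_cong) (auto split: split_indicator)
  also have "\<dots> = 0" by (subst nn_integral_cmult_indicator) auto
  finally show ?thesis by (simp add: measure_def)
qed

lemma Phi_cont: "isCont Phi x"
proof -
  interpret real_distribution N by (rule real_dist_normal_dist)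
  show ?thesis unfolding Phi_cdf by (simp add: isCont_cdf N_single)
qed

lemma Phi_strict:
  assumes "a < b" shows "Phi a < Phi b"
proof -
  interpret real_distribution N by (rule real_dist_normal_dist)
  define Mx where "Mx = max \<bar>a\<bar> \<bar>b\<bar>"
  define c where "c = std_normal_density Mx"
  have c: "c > 0" unfolding c_def by (simp add: normal_density_pos)
  have le: "c \<le> std_normal_density y" if "y \<in> {a<..b}" for y
  proof -
    have "\<bar>y\<bar> \<le> Mx" using that unfolding Mx_def by auto
    then have "y^2 \<le> Mx^2" by (metis abs_ge_zero power2_abs power_mono)
    then have "exp (- (Mx^2)/2) \<le> exp (- (y^2)/2)" by simp
    then show ?thesis unfolding c_def std_normal_density_def
      by (intro mult_left_mono) auto
  qed
  have "ennreal c * ennreal (b - a) = (\<integral>\<^sup>+ y. ennreal c * indicator {a<..b} y \<partial>lborel)"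
    using assms by (subst nn_integral_cmult_indicator) auto
  also have "\<dots> \<le> (\<integral>\<^sup>+ y. ennreal (std_normal_density y) * indicator {a<..b} y \<partial>lborel)"
    by (intro nn_integral_mono) (auto split: split_indicator intro!: ennreal_leI le)
  also have "\<dots> = emeasure N {a<..b}"
    by (rule emeasure_density[symmetric]) auto
  finally have "ennreal c * ennreal (b - a) \<le> emeasure N {a<..b}" .
  moreover have "ennreal (c * (b - a)) = ennreal c * ennreal (b - a)"
    by (rule ennreal_mult') (use c in simp)
  ultimately have "ennreal (c * (b - a)) \<le> ennreal (measure N {a<..b})"
    by (simp add: emeasure_eq_measure)
  then have "c * (b - a) \<le> measure N {a<..b}"
    using ennreal_le_iff measure_nonneg by blast
  moreover have "c * (b - a) > 0" using c assms by simp
  moreover have "cdf N b - cdf N a = measure N {a<..b}"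
    using assms by (intro cdf_diff_eq) auto
  ultimately show ?thesis unfolding Phi_cdf by linarith
qed

lemma N_sym: "distr N borel uminus = N"
proof -
  have "density (distr lborel borel uminus) (\<lambda>x. ennreal (std_normal_density x))
     = distr (density lborel (\<lambda>x. ennreal (std_normal_density (- x)))) borel uminus"
    by (rule density_distr) auto
  then show ?thesis
    by (simp add: lborel_distr_uminus std_normal_density_def)
qed

lemma Phi_neg: "Phi (- x) = 1 - Phi x"
proof -
  interpret real_distribution N by (rule real_dist_normal_dist)
  have "Phi (-x) = measure (distr N borel uminus) {..-x}"
    by (simp add: N_sym Phi_def)
  also have "\<dots> = measure N {x..}"
    by (subst measure_distr) (auto intro!: arg_cong[where f="measure N"])
  also have "{x..} = UNIV - {..<x}" by auto
  also have "measure N (UNIV - {..<x}) = 1 - measure N {..<x}"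
    using prob_compl[of "{..<x}"] by simp
  also have "measure N {..x} = measure N {..<x} + measure N {x}"
    by (subst finite_measure_Union[symmetric]) (auto intro!: arg_cong[where f="measure N"])
  then have "measure N {..<x} = Phi x" by (simp add: N_single Phi_def)
  finally show ?thesis .
qed

lemma Phi_top: "(Phi \<longlongrightarrow> 1) at_top"
proof -
  interpret real_distribution N by (rule real_dist_normal_dist)
  show ?thesis unfolding Phi_cdf by (rule cdf_lim_at_top_prob)
qed

lemma Phi_quantile:
  assumes "1/2 < q" "q < 1"
  shows "Phi (normal_quantile q) = q" "normal_quantile q > 0"
proof -
  have P0: "Phi 0 = 1/2" using Phi_neg[of 0] by simp
  obtain b where b: "Phi b > q" "b > 0"
  proof -
    from Phi_top assms(2) have "eventually (\<lambda>x. Phi x > q) at_top"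
      by (rule order_tendstoD)
    then obtain b where "\<And>x. x \<ge> b \<Longrightarrow> Phi x > q" by (auto simp: eventually_at_top_linorder)
    then show ?thesis using that[of "max b 1"] by simp
  qed
  have "\<exists>z\<ge>0. z \<le> b \<and> Phi z = q"
    using b assms P0 Phi_cont by (intro IVT) (auto intro!: continuous_at_imp_continuous_on)
  then obtain z where z: "Phi z = q" by blast
  have uniq: "w = z" if "Phi w = q" for w
    by (metis Phi_strict less_irrefl linorder_neqE_linordered_idom z that)
  have "normal_quantile q = z"
    unfolding normal_quantile_def by (rule the_equality) (use z uniq in blast)+
  then show "Phi (normal_quantile q) = q" using z by simp
  show "normal_quantile q > 0"
    using \<open>normal_quantile q = z\<close> z P0 assms Phi_strict[of z 0]
    by (cases "z > 0") (auto simp: not_less le_less)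
qed


lemma iexp_taylor2:
  "cmod (iexp x - (1 + \<i> * complex_of_real x - complex_of_real (x^2/2))) \<le> \<bar>x\<bar>^3 / 6"
proof -
  have "(\<Sum>k\<le>2. (\<i> * complex_of_real x)^k / fact k) = 1 + \<i> * complex_of_real x - complex_of_real (x^2/2)"
    by (simp add: eval_nat_numeral power2_eq_square field_simps)
  moreover have "(fact (Suc 2) :: real) = 6" by (simp add: eval_nat_numeral)
  ultimately show ?thesis using iexp_approx1[of x 2] by simp
qed

lemma poly3: "(1-p)*((p*W)^3/6) + p*(((1-p)*W)^3/6) = p*(1-p)*W^3/6*(p^2+(1-p)^2)" for p W :: real
  by (simp add: eval_nat_numeral power2_eq_square field_simps)

lemma iexp_lin: "iexp (real k * A + real m * B) = iexp A ^ k * iexp B ^ m"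
proof -
  have "\<i> * complex_of_real (real k*A + real m*B) = of_nat k * (\<i> * of_real A) + of_nat m * (\<i> * of_real B)"
    by (simp add: algebra_simps)
  then show ?thesis unfolding exp_of_nat_mult[symmetric] exp_add[symmetric] by simp
qed

lemma g_bound:
  fixes p w :: real
  assumes "0 \<le> p" "p \<le> 1"
  shows "cmod ((1-p) * iexp (-(p*w)) + p * iexp ((1-p)*w) - complex_of_real (1 - p*(1-p)*w^2/2))
          \<le> p*(1-p)*\<bar>w\<bar>^3/6"
proof -
  define E where "E x = iexp x - (1 + \<i> * complex_of_real x - complex_of_real (x^2/2))" for x
  have eq: "(1-p) * iexp (-(p*w)) + p * iexp ((1-p)*w) - complex_of_real (1 - p*(1-p)*w^2/2)
      = complex_of_real (1-p) * E (-(p*w)) + complex_of_real p * E ((1-p)*w)"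
    unfolding E_def by (simp add: field_simps power2_eq_square)
  have "cmod (complex_of_real (1-p) * E (-(p*w)) + complex_of_real p * E ((1-p)*w))
     \<le> (1-p) * cmod (E (-(p*w))) + p * cmod (E ((1-p)*w))"
    using assms by (auto intro!: order.trans[OF norm_triangle_ineq] simp: norm_mult simp del: of_real_diff)
  also have "\<dots> \<le> (1-p) * (\<bar>-(p*w)\<bar>^3/6) + p * (\<bar>(1-p)*w\<bar>^3/6)"
    using assms unfolding E_def
    by (intro add_mono mult_left_mono iexp_taylor2) auto
  also have "\<dots> = p*(1-p)*\<bar>w\<bar>^3/6 * (p^2 + (1-p)^2)"
  proof -
    have a1: "\<bar>-(p*w)\<bar> = p*\<bar>w\<bar>" using assms by (simp add: abs_mult)
    have a2: "\<bar>(1-p)*w\<bar> = (1-p)*\<bar>w\<bar>" using assms by (simp add: abs_mult)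
    show ?thesis unfolding a1 a2 by (rule poly3)
  qed
  also have "\<dots> \<le> p*(1-p)*\<bar>w\<bar>^3/6"
  proof -
    have e: "p^2 + (1-p)^2 = 1 - 2*(p*(1-p))" by (simp add: power2_eq_square algebra_simps)
    have "p*(1-p) \<ge> 0" using assms by simp
    then have "p^2 + (1-p)^2 \<le> 1" unfolding e by linarith
    moreover have "p*(1-p)*\<bar>w\<bar>^3/6 \<ge> 0" using assms by simp
    ultimately show ?thesis by (simp add: mult_left_le)
  qed
  finally show ?thesis unfolding eq .
qed

lemma gen: "(a*(1-p) + b*(-p)) * T = a*((1-p)*T) + b*(-(p*T))" for a b p T :: real
  by (simp add: algebra_simps)

lemma char_binomial:
  fixes p s t :: real
  assumes "0 \<le> p" "p \<le> 1"
  shows "char (distr (measure_pmf (binomial_pmf n p)) borel (\<lambda>k. (real k - n*p)/s)) t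
       = ((1-p) * iexp (-(p*(t/s))) + p * iexp ((1-p)*(t/s)))^n"
proof -
  define a where "a = complex_of_real p * iexp ((1-p)*(t/s))"
  define b where "b = complex_of_real (1-p) * iexp (-(p*(t/s)))"
  have "char (distr (measure_pmf (binomial_pmf n p)) borel (\<lambda>k. (real k - n*p)/s)) t
      = measure_pmf.expectation (binomial_pmf n p) (\<lambda>k. iexp (t * ((real k - n*p)/s)))"
    unfolding char_def by (subst integral_distr) auto
  also have "\<dots> = (\<Sum>k\<le>n. (real (n choose k) * p ^ k * (1 - p) ^ (n - k)) *\<^sub>R iexp (t * ((real k - n*p)/s)))"
    using assms by (intro expectation_binomial_pmf') auto
  also have "\<dots> = (\<Sum>k\<le>n. of_nat (n choose k) * a^k * b^(n-k))"
  proof (intro sum.cong refl)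
    fix k assume k: "k \<in> {..n}"
    have "iexp (t * ((real k - n*p)/s)) = iexp ((1-p)*(t/s))^k * iexp (-(p*(t/s)))^(n-k)"
    proof -
      have h1: "real k - real n*p = real k*(1-p) + real(n-k)*(-p)"
        using k by (simp add: of_nat_diff algebra_simps)
      have "t * ((real k - n*p)/s) = (real k - real n*p) * (t/s)" by simp
      also have "\<dots> = (real k*(1-p) + real(n-k)*(-p)) * (t/s)" by (subst h1) (rule refl)
      also have "\<dots> = real k * ((1-p)*(t/s)) + real (n-k) * (-(p*(t/s)))"
        by (rule gen)
      finally have eqt: "t * ((real k - n*p)/s) = real k * ((1-p)*(t/s)) + real (n-k) * (-(p*(t/s)))" .
      show ?thesis unfolding eqt by (rule iexp_lin)
    qed
    then show "(real (n choose k) * p ^ k * (1 - p) ^ (n - k)) *\<^sub>R iexp (t * ((real k - n*p)/s))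
        = of_nat (n choose k) * a^k * b^(n-k)"
      unfolding a_def b_def by (simp add: scaleR_conv_of_real power_mult_distrib)
  qed
  also have "\<dots> = (a + b)^n" by (simp add: binomial_ring)
  finally show ?thesis unfolding a_def b_def by (simp add: add.commute)
qed


lemma key_alg:
  fixes n P s Z :: real
  assumes n: "n > 0" and s: "s > 0" and ss: "s * s = n*P*(1-P)"
  shows "n*((n*P + s*Z)/n - P)^2 - (1-2*P)*((n*P+s*Z)/n - P) = P*(1-P)*(Z^2 - ((1-2*P)/s)*Z)"
proof -
  have e1: "(n*P + s*Z)/n - P = s*Z/n" using n by (simp add: field_simps)
  have e2: "P*(1-P) = s * s/n" using n ss by (simp add: field_simps)
  show ?thesis unfolding e1 e2 using n s by (simp add: field_simps power2_eq_square)
qed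

lemma sandwich_lo:
  fixes z d c Z :: real
  assumes "0 < d" "d < z" "\<bar>c\<bar> \<le> d" "-(z-d) < Z" "Z \<le> z-d"
  shows "Z^2 - c*Z \<le> z^2"
proof -
  have a: "\<bar>Z\<bar> \<le> z - d" using assms by auto
  have "Z^2 \<le> (z-d)^2" using a by (metis abs_ge_zero power2_abs power_mono)
  moreover have "\<bar>c*Z\<bar> \<le> d*(z-d)" unfolding abs_mult
    using a assms by (intro mult_mono) auto
  ultimately have "Z^2 - c*Z \<le> (z-d)^2 + d*(z-d)" by linarith
  also have "\<dots> = z*(z-d)" by (simp add: power2_eq_square algebra_simps)
  also have "\<dots> \<le> z^2" using assms by (simp add: power2_eq_square mult_left_mono)
  finally show ?thesis .
qed

lemma sandwich_hi:
  fixes z d c Z :: real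
  assumes "0 < d" "0 < z" "\<bar>c\<bar> \<le> d" "Z^2 - c*Z \<le> z^2"
  shows "-(z+2*d) < Z \<and> Z \<le> z+2*d"
proof (rule ccontr)
  assume "\<not> ?thesis"
  then have a: "\<bar>Z\<bar> > z + d" using assms by auto
  have "\<bar>c*Z\<bar> \<le> d*\<bar>Z\<bar>" unfolding abs_mult using assms by (intro mult_right_mono) auto
  then have h1: "\<bar>Z\<bar>*\<bar>Z\<bar> - d*\<bar>Z\<bar> \<le> Z^2 - c*Z" by (simp add: power2_eq_square abs_mult_self_eq)
  have h2: "(z+d)*z < \<bar>Z\<bar>*(\<bar>Z\<bar> - d)"
    using a assms by (intro mult_strict_mono) auto
  have h3: "z^2 \<le> (z+d)*z" using assms by (simp add: power2_eq_square algebra_simps)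
  have h4: "\<bar>Z\<bar>*(\<bar>Z\<bar> - d) = \<bar>Z\<bar>*\<bar>Z\<bar> - d*\<bar>Z\<bar>" by (simp add: algebra_simps)
  show False using h1 h2 h3 h4 assms(4) by linarith
qed

lemma char_bound:
  fixes P t :: real and n :: nat
  assumes P: "0 < P" "P < 1" and n: "n \<ge> 2" "t^2 \<le> 4 * real n"
  defines "s \<equiv> sqrt (real n * P * (1-P))"
  shows "cmod (char (distr (measure_pmf (binomial_pmf n P)) borel (\<lambda>k. (real k - n*P)/s)) t
            - complex_of_real ((1 + (-(t^2)/2) / real n)^n)) \<le> \<bar>t\<bar>^3 / (6 * s)"
proof -
  define w where "w = t / s"
  define g where "g = (1-P) * iexp (-(P*w)) + P * iexp ((1-P)*w)"
  define b where "b = complex_of_real (1 - P*(1-P)*w^2/2)"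
  have npos: "real n > 0" using n by simp
  have s: "s > 0" unfolding s_def using P npos by simp
  have ss: "s^2 = real n * P * (1-P)" unfolding s_def using P npos by simp
  have pw: "P*(1-P)*w^2 = t^2 / real n"
    unfolding w_def power_divide ss using P npos by (simp add: field_simps)
  have r1: "P*(1-P)*w^2/2 = (t^2/2)/real n" using pw by simp
  have r2: "1 + (-(t^2)/2)/real n = 1 - (t^2/2)/real n" by (simp add: field_simps)
  have b_eq: "b = complex_of_real (1 + (-(t^2)/2) / real n)"
    unfolding b_def r2 r1[symmetric] by simp
  have "char (distr (measure_pmf (binomial_pmf n P)) borel (\<lambda>k. (real k - n*P)/s)) t = g^n"
    unfolding g_def w_def using P by (intro char_binomial) auto
  moreover have "cmod g \<le> 1"
  proof -
    have "cmod g \<le> cmod ((1-P) * iexp (-(P*w))) + cmod (P * iexp ((1-P)*w))"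
      unfolding g_def by (rule norm_triangle_ineq)
    also have "\<dots> = (1-P) + P" using P by (simp add: norm_mult del: of_real_diff)
    finally show ?thesis by simp
  qed
  moreover have "cmod b \<le> 1"
  proof -
    have "\<bar>1 + (-(t^2)/2) / real n\<bar> \<le> 1"
      using n npos by (auto simp: abs_le_iff field_simps)
    then show ?thesis unfolding b_eq norm_of_real .
  qed
  ultimately have "cmod (char (distr (measure_pmf (binomial_pmf n P)) borel (\<lambda>k. (real k - n*P)/s)) t - b^n)
      \<le> real n * cmod (g - b)"
    by (simp add: norm_power_diff)
  also have "\<dots> \<le> real n * (P*(1-P)*\<bar>w\<bar>^3/6)"
    unfolding g_def b_def using P by (intro mult_left_mono g_bound) auto
  also have "\<dots> = \<bar>t\<bar>^3 / (6 * s)"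
  proof -
    have "real n * (P*(1-P)) = s^2" using ss by simp
    then have "real n * (P*(1-P)*\<bar>w\<bar>^3/6) = s^2 * \<bar>w\<bar>^3/6" by (simp add: mult.assoc[symmetric])
    also have "\<dots> = \<bar>t\<bar>^3 / (6 * s)" unfolding w_def using s
      by (simp add: power_divide abs_divide eval_nat_numeral field_simps)
    finally show ?thesis .
  qed
  finally show ?thesis unfolding b_eq of_real_power .
qed


theorem mainTheorem5:
  fixes p :: "nat \<Rightarrow> real" and \<alpha> :: real
  assumes p_range: "\<And>n. n \<ge> 2 \<Longrightarrow> 0 < p n \<and> p n < 1"
    and alpha: "0 < \<alpha>" "\<alpha> < 1"
    and np: "filterlim (\<lambda>n. real n * p n) at_top sequentially"
    and nq: "filterlim (\<lambda>n. real n * (1 - p n)) at_top sequentially"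
  shows "(\<lambda>n. measure_pmf.prob (binomial_pmf n (p n))
            {k. ci_lower \<alpha> n k \<le> p n \<and> p n \<le> ci_upper \<alpha> n k})
         \<longlonglongrightarrow> 1 - \<alpha>"
proof -
  define q where "q = 1 - \<alpha>/2"
  define z where "z = normal_quantile q"
  have q: "1/2 < q" "q < 1" using alpha unfolding q_def by auto
  have Phiz: "Phi z = q" and zpos: "z > 0" using Phi_quantile[OF q] unfolding z_def by auto
  have kap: "kappa \<alpha> = z^2" unfolding kappa_def z_def q_def ..
  have Kpos: "kappa \<alpha> > 0" using zpos kap by simp
  define G where "G u = 2 * Phi u - 1" for u
  have Gz: "G z = 1 - \<alpha>" unfolding G_def Phiz q_def by simp
  have Gcont: "isCont G u" for u unfolding G_def by (intro continuous_intros Phi_cont)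
  define s where "s n = sqrt (real n * p n * (1 - p n))" for n
  define Z where "Z n k = (real k - real n * p n) / s n" for n k
  define B where "B n = measure_pmf (binomial_pmf n (p n))" for n
  define M where "M n = distr (B n) borel (Z n)" for n
  define c where "c n = (1 - 2 * p n) / s n" for n
  define S where "S n = {k. ci_lower \<alpha> n k \<le> p n \<and> p n \<le> ci_upper \<alpha> n k}" for n
  have evn: "eventually (\<lambda>n. 2 \<le> n) sequentially" by (rule eventually_ge_at_top)
  have var_top: "filterlim (\<lambda>n. real n * p n * (1 - p n)) at_top sequentially"
    unfolding filterlim_at_top
  proof (intro allI)
    fix C :: real
    have "eventually (\<lambda>n. 2*\<bar>C\<bar> \<le> real n * p n) sequentially" using np by (simp add: filterlim_at_top)
    moreover have "eventually (\<lambda>n. 2*\<bar>C\<bar> \<le> real n * (1 - p n)) sequentially" using nq by (simp add: filterlim_at_top)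
    ultimately show "eventually (\<lambda>n. C \<le> real n * p n * (1 - p n)) sequentially"
      using evn
    proof eventually_elim
      case (elim n)
      then have P: "0 < p n" "p n < 1" using p_range by auto
      show ?case
      proof (cases "p n \<le> 1/2")
        case True
        then have "real n * p n * (1/2) \<le> real n * p n * (1 - p n)" using P elim
          by (intro mult_left_mono) auto
        then show ?thesis using elim by linarith
      next
        case False
        then have "real n * (1 - p n) * (1/2) \<le> real n * (1 - p n) * p n" using P elim
          by (intro mult_left_mono) auto
        then show ?thesis using elim by (simp add: algebra_simps)
      qed
    qed
  qed
  have s_top: "filterlim s at_top sequentially"
    unfolding s_def by (rule filterlim_compose[OF sqrt_at_top var_top])
  have inv_s: "(\<lambda>n. inverse (s n)) \<longlonglongrightarrow> 0" by (rule tendsto_inverse_0_at_top[OF s_top])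
  have spos: "s n > 0" if "n \<ge> 2" for n
    using p_range[OF that] that unfolding s_def by simp

  have wc: "weak_conv_m M std_normal_distribution"
  proof (rule levy_continuity)
    show "real_distribution (M n)" for n
      unfolding M_def B_def by (rule prob_space.real_distribution_distr[OF prob_space_measure_pmf]) simp
    show "real_distribution std_normal_distribution" by (rule real_dist_normal_dist)
    fix t :: real
    have evt: "eventually (\<lambda>n. t^2/4 \<le> real n) sequentially"
      using filterlim_real_sequentially unfolding filterlim_at_top by (rule spec)
    have bound: "eventually (\<lambda>n. norm (char (M n) t - complex_of_real ((1 + (-(t^2)/2)/real n)^n))
                   \<le> \<bar>t\<bar>^3/6 * inverse (s n)) sequentially"
      using evn evt
    proof eventually_elim
      case (elim n)
      then have P: "0 < p n" "p n < 1" using p_range by auto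
      have "norm (char (M n) t - complex_of_real ((1 + (-(t^2)/2)/real n)^n)) \<le> \<bar>t\<bar>^3 / (6 * s n)"
        unfolding M_def B_def Z_def s_def using P elim by (intro char_bound) auto
      also have "\<bar>t\<bar>^3 / (6 * s n) = \<bar>t\<bar>^3/6 * inverse (s n)" by (simp add: field_simps)
      finally show ?case .
    qed
    have lim0: "(\<lambda>n. \<bar>t\<bar>^3/6 * inverse (s n)) \<longlonglongrightarrow> 0"
      using tendsto_mult[OF tendsto_const inv_s, of "\<bar>t\<bar>^3/6"] by simp
    have "(\<lambda>n. complex_of_real ((1 + (-(t^2)/2)/real n)^n)) \<longlonglongrightarrow> complex_of_real (exp (-(t^2)/2))"
      by (rule isCont_tendsto_compose [OF _ tendsto_exp_limit_sequentially]) auto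
    then have "(\<lambda>n. char (M n) t) \<longlonglongrightarrow> complex_of_real (exp (-(t^2)/2))"
      by (rule Lim_transform) (rule Lim_null_comparison [OF bound lim0])
    then show "(\<lambda>n. char (M n) t) \<longlonglongrightarrow> char std_normal_distribution t"
      by (simp add: char_std_normal_distribution)
  qed
  have cdf_lim: "(\<lambda>n. cdf (M n) x) \<longlonglongrightarrow> Phi x" for x
    using wc Phi_cont unfolding weak_conv_m_def weak_conv_def Phi_cdf by auto
  have cdf_eq: "cdf (M n) x = measure (B n) {k. Z n k \<le> x}" for n x
  proof -
    have "cdf (M n) x = measure (B n) (Z n -` {..x} \<inter> space (B n))"
      unfolding cdf_def M_def by (rule measure_distr) (auto simp: B_def)
    also have "Z n -` {..x} \<inter> space (B n) = {k. Z n k \<le> x}" by (auto simp: B_def)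
    finally show ?thesis .
  qed
  define D where "D n u = measure (B n) {k. -u < Z n k \<and> Z n k \<le> u}" for n u
  have D_lim: "(\<lambda>n. D n u) \<longlonglongrightarrow> G u" if "u \<ge> 0" for u
  proof -
    have "D n u = cdf (M n) u - cdf (M n) (-u)" for n
    proof -
      have "{k. -u < Z n k \<and> Z n k \<le> u} = {k. Z n k \<le> u} - {k. Z n k \<le> -u}" by auto
      then have "D n u = measure (B n) ({k. Z n k \<le> u} - {k. Z n k \<le> -u})" unfolding D_def by simp
      also have "\<dots> = measure (B n) {k. Z n k \<le> u} - measure (B n) {k. Z n k \<le> -u}"
        unfolding B_def using that by (intro measure_pmf.finite_measure_Diff) auto
      finally show ?thesis unfolding cdf_eq .
    qed
    moreover have "G u = Phi u - Phi (-u)" unfolding G_def Phi_neg by simp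
    ultimately show ?thesis using tendsto_diff[OF cdf_lim cdf_lim] by simp
  qed
  have Seq: "S n = {k. (Z n k)^2 - c n * Z n k \<le> z^2}" if n: "n \<ge> 2" for n
  proof -
    have P: "0 < p n" "p n < 1" using p_range[OF n] by auto
    have sp: "s n > 0" using spos[OF n] .
    have ss: "s n * s n = real n * p n * (1 - p n)" unfolding s_def using P n by simp
    have "k \<in> S n \<longleftrightarrow> (Z n k)^2 - c n * Z n k \<le> z^2" for k
    proof -
      have kk: "real n * p n + s n * Z n k = real k" unfolding Z_def using sp by simp
      have "k \<in> S n \<longleftrightarrow> real n * (real k / real n - p n)^2 - (1-2*p n)*(real k / real n - p n)
              \<le> kappa \<alpha> * p n * (1 - p n)"
        unfolding S_def using ci_iff[OF n Kpos] by simp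
      also have "real n * (real k / real n - p n)^2 - (1-2*p n)*(real k / real n - p n)
          = p n * (1 - p n) * ((Z n k)^2 - c n * Z n k)"
        using key_alg[of "real n" "s n" "p n" "Z n k"] n sp ss unfolding kk c_def by simp
      also have "kappa \<alpha> * p n * (1 - p n) = p n * (1 - p n) * z^2" unfolding kap by simp
      also have "p n * (1 - p n) * ((Z n k)^2 - c n * Z n k) \<le> p n * (1 - p n) * z^2
          \<longleftrightarrow> (Z n k)^2 - c n * Z n k \<le> z^2"
        using P by (intro mult_le_cancel_left_pos) simp
      finally show ?thesis .
    qed
    then show ?thesis by auto
  qed
  have c_small: "eventually (\<lambda>n. \<bar>c n\<bar> \<le> \<delta>) sequentially" if "\<delta> > 0" for \<delta>
  proof -
    have "eventually (\<lambda>n. inverse (s n) < \<delta>) sequentially"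
      using order_tendstoD(2)[OF inv_s that] .
    then show ?thesis using evn
    proof eventually_elim
      case (elim n)
      have P: "0 < p n" "p n < 1" using p_range elim by auto
      have "\<bar>c n\<bar> = \<bar>1 - 2 * p n\<bar> * inverse (s n)"
        unfolding c_def using spos[of n] elim by (simp add: divide_inverse abs_mult)
      also have "\<dots> \<le> 1 * inverse (s n)"
        using P spos[of n] elim by (intro mult_right_mono) auto
      finally show ?case using elim by simp
    qed
  qed
  have Pn: "measure_pmf.prob (binomial_pmf n (p n)) {k. ci_lower \<alpha> n k \<le> p n \<and> p n \<le> ci_upper \<alpha> n k}
      = measure (B n) (S n)" for n unfolding B_def S_def ..
  show ?thesis unfolding Pn
  proof (rule order_tendstoI)
    fix a assume a: "a < 1 - \<alpha>"
    have "eventually (\<lambda>u. a < G u) (at z)"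
      using order_tendstoD(1)[OF Gcont[of z, unfolded isCont_def] a[folded Gz]] .
    then obtain d where d: "d > 0" "\<And>x. x \<noteq> z \<Longrightarrow> dist x z < d \<Longrightarrow> a < G x"
      unfolding eventually_at by auto
    define \<delta> where "\<delta> = min (d/2) (z/2)"
    have dl: "\<delta> > 0" "\<delta> < z" "\<delta> < d" using d zpos unfolding \<delta>_def by auto
    have "a < G (z - \<delta>)" using d(2)[of "z - \<delta>"] dl by (simp add: dist_real_def)
    then have "eventually (\<lambda>n. a < D n (z - \<delta>)) sequentially"
      using order_tendstoD(1)[OF D_lim] dl by simp
    then show "eventually (\<lambda>n. a < measure (B n) (S n)) sequentially"
      using c_small[OF dl(1)] evn
    proof eventually_elim
      case (elim n)
      have "{k. -(z-\<delta>) < Z n k \<and> Z n k \<le> z-\<delta>} \<subseteq> S n"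
        unfolding Seq[OF elim(3)] using sandwich_lo[of \<delta> z "c n"] dl elim(2) by auto
      then have "D n (z - \<delta>) \<le> measure (B n) (S n)"
        unfolding D_def B_def by (intro measure_pmf.finite_measure_mono) auto
      then show ?case using elim(1) by simp
    qed
  next
    fix b assume b: "b > 1 - \<alpha>"
    have "eventually (\<lambda>u. G u < b) (at z)"
      using order_tendstoD(2)[OF Gcont[of z, unfolded isCont_def] b[folded Gz]] .
    then obtain d where d: "d > 0" "\<And>x. x \<noteq> z \<Longrightarrow> dist x z < d \<Longrightarrow> G x < b"
      unfolding eventually_at by auto
    define \<delta> where "\<delta> = d/4"
    have dl: "\<delta> > 0" "2*\<delta> < d" using d unfolding \<delta>_def by auto
    have "G (z + 2*\<delta>) < b" using d(2)[of "z + 2*\<delta>"] dl by (simp add: dist_real_def)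
    then have "eventually (\<lambda>n. D n (z + 2*\<delta>) < b) sequentially"
      using order_tendstoD(2)[OF D_lim] dl zpos by simp
    then show "eventually (\<lambda>n. measure (B n) (S n) < b) sequentially"
      using c_small[OF dl(1)] evn
    proof eventually_elim
      case (elim n)
      have "S n \<subseteq> {k. -(z+2*\<delta>) < Z n k \<and> Z n k \<le> z+2*\<delta>}"
        unfolding Seq[OF elim(3)] using sandwich_hi[of \<delta> z "c n"] dl zpos elim(2) by auto
      then have "measure (B n) (S n) \<le> D n (z + 2*\<delta>)"
        unfolding D_def B_def by (intro measure_pmf.finite_measure_mono) auto
      then show ?case using elim(1) by simp
    qed
  qed
qed

end
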